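(* Let $G$ be a countable directed graph and let $v_{1},v_{2},v_{3},v_{4}$ be mutually distinct vertices of $G$. Then the subsets $W^{*}(G)_{v_{1}}^{v_{2}}=L_{v_{1}}W^{*}(G)L_{v_{2}}$ and $W^{*}(G)_{v_{3}}^{v_{4}}=L_{v_{3}}W^{*}(G)L_{v_{4}}$ of $W^{*}(G)$ are free over $D_{G}$ in $(W^{*}(G),E)$.
   Context: $G$ is a countable directed graph with vertex set $V(G)$; $\mathbb{F}^{+}(G)$ is its free semigroupoid (all vertices and admissible finite paths). On $H_{G}=l^{2}(\mathbb{F}^{+}(G))$ with orthonormal basis $\{\xi_{w}\}$, $L_{w}\xi_{h}=\xi_{wh}$ if $wh\in\mathbb{F}^{+}(G)$ and $0$ otherwise; $L_{w}^{*}$ is its adjoint; $L_v$ ($v\in V(G)$) are projections. $W^{*}(G)$ is the weak-operator closure of the $*$-algebra generated by all $L_{w},L_{w}^{*}$; $D_{G}$ is the von Neumann subalgebra generated by the $L_{v}$. Each $a\in W^{*}(G)$ has Fourier expansion $a=\sum_{w\in\mathbb{F}^{+}(G:a),u_{w}\in\{1,*\}}p_{w}L_{w}^{u_{w}}$ ($p_w\neq0$) with $V(G:a)$ the set of vertices in the support. The conditional expectation $E:W^{*}(G)\to D_{G}$ is $E(a)=\sum_{v\in V(G:a)}p_{v}L_{v}$; "free over $D_G$" means free with amalgamation over $D_G$ with respect to $E$. *)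

theory Defs
  imports "HOL-Analysis.Analysis" "Graph_Theory.Digraph"
begin

text \<open>Elements of the free semigroupoid: vertices, or nonempty finite admissible
  edge lists. Convention: e1 e2 is admissible iff head e1 = tail e2
  (edge e = s(e) e r(e), with s = tail, r = head).\<close>

datatype ('v,'e) fpath = Vtx 'v | Edg "'e list"

definition FP :: "('v,'e) pre_digraph \<Rightarrow> ('v,'e) fpath set" where
  "FP G = {Vtx v | v. v \<in> verts G} \<union>
     {Edg es | es. es \<noteq> [] \<and> set es \<subseteq> arcs G \<and>
        (\<forall>i. Suc i < length es \<longrightarrow> head G (es ! i) = tail G (es ! Suc i))}"

fun pstart :: "('v,'e) pre_digraph \<Rightarrow> ('v,'e) fpath \<Rightarrow> 'v" where
  "pstart G (Vtx v) = v"
| "pstart G (Edg es) = tail G (hd es)"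

fun pend :: "('v,'e) pre_digraph \<Rightarrow> ('v,'e) fpath \<Rightarrow> 'v" where
  "pend G (Vtx v) = v"
| "pend G (Edg es) = head G (last es)"

text \<open>Product w h in the free semigroupoid (None = not admissible / empty word).\<close>
fun pmult :: "('v,'e) pre_digraph \<Rightarrow> ('v,'e) fpath \<Rightarrow> ('v,'e) fpath \<Rightarrow> ('v,'e) fpath option" where
  "pmult G (Vtx v) (Vtx u) = (if v = u then Some (Vtx v) else None)"
| "pmult G (Vtx v) (Edg fs) = (if v = tail G (hd fs) then Some (Edg fs) else None)"
| "pmult G (Edg es) (Vtx u) = (if head G (last es) = u then Some (Edg es) else None)"
| "pmult G (Edg es) (Edg fs) =
     (if head G (last es) = tail G (hd fs) then Some (Edg (es @ fs)) else None)"

type_synonym ('v,'e) vec = "('v,'e) fpath \<Rightarrow> complex"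
type_synonym ('v,'e) op = "('v,'e) vec \<Rightarrow> ('v,'e) vec"

definition l2 :: "('v,'e) pre_digraph \<Rightarrow> ('v,'e) vec set" where
  "l2 G = {f. (\<forall>x. x \<notin> FP G \<longrightarrow> f x = 0) \<and> (\<lambda>x. (cmod (f x))\<^sup>2) summable_on UNIV}"

definition linner :: "('v,'e) vec \<Rightarrow> ('v,'e) vec \<Rightarrow> complex" where
  "linner f g = infsum (\<lambda>x. f x * cnj (g x)) UNIV"

definition lnorm :: "('v,'e) vec \<Rightarrow> real" where
  "lnorm f = sqrt (infsum (\<lambda>x. (cmod (f x))\<^sup>2) UNIV)"

definition xi :: "('v,'e) fpath \<Rightarrow> ('v,'e) vec" where
  "xi w = (\<lambda>x. if x = w then 1 else 0)"

text \<open>Operators are represented as maps on all functions, normalised to vanish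
  outside l2; a bounded operator on l2 is one that is linear and bounded there.\<close>
definition is_op :: "('v,'e) pre_digraph \<Rightarrow> ('v,'e) op \<Rightarrow> bool" where
  "is_op G T \<longleftrightarrow>
     (\<forall>f. f \<notin> l2 G \<longrightarrow> T f = (\<lambda>x. 0)) \<and>
     (\<forall>f \<in> l2 G. T f \<in> l2 G) \<and>
     (\<forall>f \<in> l2 G. \<forall>g \<in> l2 G. T (\<lambda>x. f x + g x) = (\<lambda>x. T f x + T g x)) \<and>
     (\<forall>f \<in> l2 G. \<forall>c. T (\<lambda>x. c * f x) = (\<lambda>x. c * T f x)) \<and>
     (\<exists>C. \<forall>f \<in> l2 G. lnorm (T f) \<le> C * lnorm f)"

definition zero_op :: "('v,'e) op" where
  "zero_op = (\<lambda>f x. 0)"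

definition add_op :: "('v,'e) op \<Rightarrow> ('v,'e) op \<Rightarrow> ('v,'e) op" where
  "add_op A B = (\<lambda>f x. A f x + B f x)"

definition smul_op :: "complex \<Rightarrow> ('v,'e) op \<Rightarrow> ('v,'e) op" where
  "smul_op c A = (\<lambda>f x. c * A f x)"

text \<open>Hilbert space adjoint: (T* f)(x) = < T* f, xi_x > = < f, T xi_x >.\<close>
definition adj :: "('v,'e) pre_digraph \<Rightarrow> ('v,'e) op \<Rightarrow> ('v,'e) op" where
  "adj G T = (\<lambda>f x. if f \<in> l2 G \<and> x \<in> FP G then linner f (T (xi x)) else 0)"

text \<open>Creation operator L_w: L_w xi_h = xi_{wh} if wh is in F+(G), 0 otherwise.\<close>
definition Lop :: "('v,'e) pre_digraph \<Rightarrow> ('v,'e) fpath \<Rightarrow> ('v,'e) op" where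
  "Lop G w = (\<lambda>f x.
     if f \<in> l2 G \<and> x \<in> FP G \<and> (\<exists>h \<in> FP G. pmult G w h = Some x)
     then f (THE h. h \<in> FP G \<and> pmult G w h = Some x) else 0)"

inductive_set star_alg :: "('v,'e) pre_digraph \<Rightarrow> ('v,'e) op set \<Rightarrow> ('v,'e) op set"
  for G :: "('v,'e) pre_digraph" and X :: "('v,'e) op set" where
  gen: "A \<in> X \<Longrightarrow> A \<in> star_alg G X"
| add: "A \<in> star_alg G X \<Longrightarrow> B \<in> star_alg G X \<Longrightarrow> add_op A B \<in> star_alg G X"
| smul: "A \<in> star_alg G X \<Longrightarrow> smul_op c A \<in> star_alg G X"
| mult: "A \<in> star_alg G X \<Longrightarrow> B \<in> star_alg G X \<Longrightarrow> A \<circ> B \<in> star_alg G X"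
| star: "A \<in> star_alg G X \<Longrightarrow> adj G A \<in> star_alg G X"

definition wot_closure :: "('v,'e) pre_digraph \<Rightarrow> ('v,'e) op set \<Rightarrow> ('v,'e) op set" where
  "wot_closure G S = {T. is_op G T \<and>
     (\<forall>F. finite F \<longrightarrow> F \<subseteq> l2 G \<times> l2 G \<longrightarrow>
        (\<forall>\<epsilon>>0. \<exists>A \<in> S. \<forall>(f,g) \<in> F. cmod (linner (T f) g - linner (A f) g) < \<epsilon>))}"

definition vertex_ops :: "('v,'e) pre_digraph \<Rightarrow> ('v,'e) op set" where
  "vertex_ops G = {Lop G (Vtx v) | v. v \<in> verts G}"

definition Wstar :: "('v,'e) pre_digraph \<Rightarrow> ('v,'e) op set" where
  "Wstar G = wot_closure G (star_alg G {Lop G w | w. w \<in> FP G})"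

definition DG :: "('v,'e) pre_digraph \<Rightarrow> ('v,'e) op set" where
  "DG G = wot_closure G (star_alg G (vertex_ops G))"

definition gen_DG :: "('v,'e) pre_digraph \<Rightarrow> ('v,'e) op set \<Rightarrow> ('v,'e) op set" where
  "gen_DG G X = wot_closure G (star_alg G (vertex_ops G \<union> X))"

text \<open>Conditional expectation E(a) = sum over vertices v of p_v L_v, where the
  vertex Fourier coefficient is p_v = < a xi_v, xi_v >.\<close>
definition condE :: "('v,'e) pre_digraph \<Rightarrow> ('v,'e) op \<Rightarrow> ('v,'e) op" where
  "condE G a = (\<lambda>f x. if f \<in> l2 G \<and> x \<in> FP G
      then linner (a (xi (Vtx (pstart G x)))) (xi (Vtx (pstart G x))) * f x else 0)"

definition corner :: "('v,'e) pre_digraph \<Rightarrow> 'v \<Rightarrow> 'v \<Rightarrow> ('v,'e) op set" where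
  "corner G v1 v2 = {Lop G (Vtx v1) \<circ> a \<circ> Lop G (Vtx v2) | a. a \<in> Wstar G}"

text \<open>Two subsets X1, X2 are free over D_G (w.r.t. E) iff the D_G-algebras they
  generate are free with amalgamation: every alternating product of centred
  elements has zero expectation.\<close>
definition free_over_DG :: "('v,'e) pre_digraph \<Rightarrow> ('v,'e) op set \<Rightarrow> ('v,'e) op set \<Rightarrow> bool" where
  "free_over_DG G X1 X2 \<longleftrightarrow>
     (\<forall>xs :: (bool \<times> ('v,'e) op) list.
        xs \<noteq> [] \<longrightarrow>
        (\<forall>i. Suc i < length xs \<longrightarrow> fst (xs ! i) \<noteq> fst (xs ! Suc i)) \<longrightarrow>
        (\<forall>(b, a) \<in> set xs. a \<in> gen_DG G (if b then X1 else X2) \<and> condE G a = zero_op) \<longrightarrow>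
        condE G (foldr (\<circ>) (map snd xs) id) = zero_op)"

end

theory Submission
  imports Defs
begin


lemma infsum_single1: "infsum (\<lambda>y. if y = w then (c::complex) else 0) UNIV = c"
proof -
  have "infsum (\<lambda>y. if y = w then c else 0) UNIV = infsum (\<lambda>y. if y = w then c else 0) {w}"
    by (rule infsum_cong_neutral) auto
  then show ?thesis by simp
qed

lemma linner_xi: "linner f (xi w) = f w"
proof -
  have "linner f (xi w) = infsum (\<lambda>y. if y = w then f w else 0) UNIV"
    unfolding linner_def xi_def by (rule infsum_cong) auto
  then show ?thesis by (simp add: infsum_single1)
qed

lemma linner_xi_c: "linner f (\<lambda>y. c * xi w y) = f w * cnj c"
proof -
  have "linner f (\<lambda>y. c * xi w y) = infsum (\<lambda>y. if y = w then f w * cnj c else 0) UNIV"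
    unfolding linner_def xi_def by (rule infsum_cong) auto
  then show ?thesis by (simp add: infsum_single1)
qed

lemma linner_zero: "(\<And>y. f y * cnj (g y) = 0) \<Longrightarrow> linner f g = 0"
  unfolding linner_def by (rule infsum_0) auto

lemma xi_l2: "w \<in> FP G \<Longrightarrow> xi w \<in> l2 G"
proof -
  assume w: "w \<in> FP G"
  have "(\<lambda>x. (cmod (xi w x))\<^sup>2) summable_on UNIV \<longleftrightarrow> (\<lambda>x. (cmod (xi w x))\<^sup>2) summable_on {w}"
    by (rule summable_on_cong_neutral) (auto simp: xi_def)
  then show ?thesis using w unfolding l2_def by (auto simp: xi_def)
qed

lemma zero_l2: "(\<lambda>x. 0) \<in> l2 G"
  unfolding l2_def by auto

lemma mult_l2:
  assumes f: "f \<in> l2 G" and K: "\<And>x. cmod (c x) \<le> K"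
  shows "(\<lambda>x. c x * f x) \<in> l2 G"
proof -
  have s: "(\<lambda>x. (cmod (f x))\<^sup>2) summable_on UNIV" using f unfolding l2_def by auto
  have "(\<lambda>x. K\<^sup>2 * (cmod (f x))\<^sup>2) summable_on UNIV" by (rule summable_on_cmult_right[OF s])
  moreover have "(cmod (c x * f x))\<^sup>2 \<le> K\<^sup>2 * (cmod (f x))\<^sup>2" for x
  proof -
    have "cmod (c x * f x) \<le> K * cmod (f x)" using K[of x] by (simp add: norm_mult mult_right_mono)
    then have "(cmod (c x * f x))\<^sup>2 \<le> (K * cmod (f x))\<^sup>2" by (simp add: power_mono)
    then show ?thesis by (simp add: power_mult_distrib)
  qed
  ultimately have "(\<lambda>x. (cmod (c x * f x))\<^sup>2) summable_on UNIV"
    by (rule summable_on_comparison_test) auto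
  then show ?thesis using f unfolding l2_def by auto
qed

lemma op_zero: assumes "is_op G T" shows "T (\<lambda>x. 0) = (\<lambda>x. 0)"
proof -
  have "\<forall>f\<in>l2 G. \<forall>c. T (\<lambda>x. c * f x) = (\<lambda>x. c * T f x)" using assms unfolding is_op_def by blast
  from this[rule_format, OF zero_l2, of 0] show ?thesis by simp
qed

lemma op_out: assumes "is_op G T" "x \<notin> FP G" shows "T f x = 0"
proof (cases "f \<in> l2 G")
  case True
  then have "T f \<in> l2 G" using assms(1) unfolding is_op_def by blast
  then show ?thesis using assms(2) unfolding l2_def by blast
next
  case False
  then show ?thesis using assms(1) unfolding is_op_def by simp
qed

lemma l2_out: "f \<in> l2 G \<Longrightarrow> x \<notin> FP G \<Longrightarrow> f x = 0"
  unfolding l2_def by auto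

lemma pmult_vtx: "pmult G (Vtx v) h = Some x \<longleftrightarrow> h = x \<and> pstart G h = v"
  by (cases h) auto

lemma Lop_vtx: "Lop G (Vtx v) f = (\<lambda>x. if f \<in> l2 G \<and> x \<in> FP G \<and> pstart G x = v then f x else 0)"
proof -
  have "(THE h. h \<in> FP G \<and> pmult G (Vtx v) h = Some x) = x" if "x \<in> FP G" "pstart G x = v" for x
    using that by (auto simp: pmult_vtx)
  then show ?thesis unfolding Lop_def by (auto simp: pmult_vtx intro!: ext)
qed

lemma pstart_verts: "wf_digraph G \<Longrightarrow> x \<in> FP G \<Longrightarrow> pstart G x \<in> verts G"
  unfolding FP_def by (auto intro!: wf_digraph.tail_in_verts hd_in_set)

lemma Vtx_FP: "v \<in> verts G \<Longrightarrow> Vtx v \<in> FP G"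
  unfolding FP_def by auto



definition inM :: "('v,'e) pre_digraph \<Rightarrow> 'v set \<Rightarrow> ('v,'e) vec \<Rightarrow> bool" where
  "inM G S f \<longleftrightarrow> (\<forall>x. (x \<notin> FP G \<or> pstart G x \<notin> S) \<longrightarrow> f x = 0)"

definition InvS :: "('v,'e) pre_digraph \<Rightarrow> 'v set \<Rightarrow> ('v,'e) op \<Rightarrow> bool" where
  "InvS G S A \<longleftrightarrow> (\<forall>f. inM G S f \<longrightarrow> inM G S (A f)) \<and>
     (\<exists>c K. (\<forall>w. cmod (c w) \<le> K) \<and>
        (\<forall>f\<in>l2 G. (\<forall>x. pstart G x \<in> S \<longrightarrow> f x = 0) \<longrightarrow> A f = (\<lambda>x. c (pstart G x) * f x)))"

lemma xi_inM: "x \<in> FP G \<Longrightarrow> pstart G x \<in> S \<Longrightarrow> inM G S (xi x)"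
  unfolding inM_def xi_def by auto

lemma inv_star:
  assumes "v1 \<in> S" "v2 \<in> S" "A \<in> star_alg G (vertex_ops G \<union> corner G v1 v2)"
  shows "InvS G S A"
  using assms(3)
proof (induction rule: star_alg.induct)
  case (gen A)
  then consider v where "A = Lop G (Vtx v)"
    | a where "a \<in> Wstar G" "A = Lop G (Vtx v1) \<circ> a \<circ> Lop G (Vtx v2)"
    unfolding vertex_ops_def corner_def by blast
  then show ?case
  proof cases
    case 1
    have i: "inM G S (A f)" if "inM G S f" for f
      using that unfolding inM_def 1 Lop_vtx by auto
    have ii: "A f = (\<lambda>x. (if pstart G x = v then 1 else 0) * f x)" if "f \<in> l2 G" for f
      unfolding 1 Lop_vtx using that by (auto intro!: ext simp: l2_out)
    show ?thesis unfolding InvS_def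
      apply (intro conjI allI impI i)
       apply assumption
      apply (rule exI[of _ "\<lambda>w. if w = v then 1 else 0"], rule exI[of _ 1])
      using ii by auto
  next
    case 2
    have op: "is_op G a" using 2(1) unfolding Wstar_def wot_closure_def by blast
    have i: "inM G S (A f)" for f
      using assms(1) unfolding inM_def 2(2) Lop_vtx by auto
    have ii: "A f = (\<lambda>x. 0 * f x)" if "f \<in> l2 G" "\<forall>x. pstart G x \<in> S \<longrightarrow> f x = 0" for f
    proof -
      have "Lop G (Vtx v2) f = (\<lambda>x. 0)" unfolding Lop_vtx using that assms(2) by (auto intro!: ext)
      then show ?thesis unfolding 2(2) using op_zero[OF op] by (simp add: Lop_vtx)
    qed
    show ?thesis unfolding InvS_def
      apply (intro conjI allI impI i)
      apply (rule exI[of _ "\<lambda>w. 0"], rule exI[of _ 0])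
      using ii by auto
  qed
next
  case (add A B)
  from add.IH(1) obtain cA KA where A: "\<forall>w. cmod (cA w) \<le> KA"
    "\<forall>f\<in>l2 G. (\<forall>x. pstart G x \<in> S \<longrightarrow> f x = 0) \<longrightarrow> A f = (\<lambda>x. cA (pstart G x) * f x)"
    unfolding InvS_def by blast
  from add.IH(2) obtain cB KB where B: "\<forall>w. cmod (cB w) \<le> KB"
    "\<forall>f\<in>l2 G. (\<forall>x. pstart G x \<in> S \<longrightarrow> f x = 0) \<longrightarrow> B f = (\<lambda>x. cB (pstart G x) * f x)"
    unfolding InvS_def by blast
  have i: "inM G S (add_op A B f)" if "inM G S f" for f
    using add.IH that unfolding InvS_def inM_def add_op_def by simp
  have K: "cmod (cA w + cB w) \<le> KA + KB" for w
    using A(1) B(1) norm_triangle_le add_mono by metis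
  show ?case unfolding InvS_def
    apply (intro conjI allI impI i)
     apply assumption
    apply (rule exI[of _ "\<lambda>w. cA w + cB w"], rule exI[of _ "KA + KB"])
    using A(2) B(2) K by (auto simp: add_op_def algebra_simps)
next
  case (smul A c)
  from smul.IH obtain cA KA where A: "\<forall>w. cmod (cA w) \<le> KA"
    "\<forall>f\<in>l2 G. (\<forall>x. pstart G x \<in> S \<longrightarrow> f x = 0) \<longrightarrow> A f = (\<lambda>x. cA (pstart G x) * f x)"
    unfolding InvS_def by blast
  have i: "inM G S (smul_op c A f)" if "inM G S f" for f
    using smul.IH that unfolding InvS_def inM_def smul_op_def by simp
  have K: "cmod (c * cA w) \<le> cmod c * KA" for w
    using A(1) by (simp add: norm_mult mult_left_mono)
  show ?case unfolding InvS_def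
    apply (intro conjI allI impI i)
     apply assumption
    apply (rule exI[of _ "\<lambda>w. c * cA w"], rule exI[of _ "cmod c * KA"])
    using A(2) K by (auto simp: smul_op_def algebra_simps)
next
  case (mult A B)
  from mult.IH(1) obtain cA KA where A: "\<forall>w. cmod (cA w) \<le> KA"
    "\<forall>f\<in>l2 G. (\<forall>x. pstart G x \<in> S \<longrightarrow> f x = 0) \<longrightarrow> A f = (\<lambda>x. cA (pstart G x) * f x)"
    unfolding InvS_def by blast
  from mult.IH(2) obtain cB KB where B: "\<forall>w. cmod (cB w) \<le> KB"
    "\<forall>f\<in>l2 G. (\<forall>x. pstart G x \<in> S \<longrightarrow> f x = 0) \<longrightarrow> B f = (\<lambda>x. cB (pstart G x) * f x)"
    unfolding InvS_def by blast
  have i: "inM G S ((A \<circ> B) f)" if "inM G S f" for f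
    using mult.IH that unfolding InvS_def by simp
  have KA0: "0 \<le> KA" using A(1) norm_ge_zero order_trans by metis
  have K: "cmod (cA w * cB w) \<le> KA * KB" for w
    using A(1) B(1) KA0 by (simp add: norm_mult mult_mono)
  have ii: "(A \<circ> B) f = (\<lambda>x. (cA (pstart G x) * cB (pstart G x)) * f x)"
    if f: "f \<in> l2 G" "\<forall>x. pstart G x \<in> S \<longrightarrow> f x = 0" for f
  proof -
    have Bf: "B f = (\<lambda>x. cB (pstart G x) * f x)" using B(2) f by blast
    have "B f \<in> l2 G" unfolding Bf by (rule mult_l2[OF f(1)]) (use B(1) in blast)
    moreover have "\<forall>x. pstart G x \<in> S \<longrightarrow> B f x = 0" using f(2) Bf by simp
    ultimately have "A (B f) = (\<lambda>x. cA (pstart G x) * B f x)" using A(2) by blast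
    then show ?thesis using Bf by (simp add: algebra_simps)
  qed
  show ?case unfolding InvS_def
    apply (intro conjI allI impI i)
     apply assumption
    apply (rule exI[of _ "\<lambda>w. cA w * cB w"], rule exI[of _ "KA * KB"])
    using ii K by auto
next
  case (star A)
  from star.IH obtain c K where A: "\<forall>w. cmod (c w) \<le> K"
    "\<forall>f\<in>l2 G. (\<forall>x. pstart G x \<in> S \<longrightarrow> f x = 0) \<longrightarrow> A f = (\<lambda>x. c (pstart G x) * f x)"
    unfolding InvS_def by blast
  have Ai: "inM G S (A f)" if "inM G S f" for f using star.IH that unfolding InvS_def by blast
  have Axi: "A (xi x) = (\<lambda>y. c (pstart G x) * xi x y)" if "x \<in> FP G" "pstart G x \<notin> S" for x
  proof -
    have "A (xi x) = (\<lambda>y. c (pstart G y) * xi x y)"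
      using A(2) xi_l2[OF that(1)] that(2) by (auto simp: xi_def)
    then show ?thesis by (auto simp: xi_def intro!: ext)
  qed
  have i: "inM G S (adj G A f)" if "inM G S f" for f
    unfolding inM_def adj_def
  proof (intro allI impI)
    fix x assume x: "x \<notin> FP G \<or> pstart G x \<notin> S"
    show "(if f \<in> l2 G \<and> x \<in> FP G then linner f (A (xi x)) else 0) = 0"
    proof (cases "f \<in> l2 G \<and> x \<in> FP G")
      case True
      then have "pstart G x \<notin> S" using x by blast
      then have "linner f (A (xi x)) = f x * cnj (c (pstart G x))"
        using Axi True by (simp add: linner_xi_c)
      moreover have "f x = 0" using that x unfolding inM_def by blast
      ultimately show ?thesis using True by simp
    qed auto
  qed
  have ii: "adj G A f = (\<lambda>x. cnj (c (pstart G x)) * f x)"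
    if f: "f \<in> l2 G" "\<forall>x. pstart G x \<in> S \<longrightarrow> f x = 0" for f
  proof (rule ext)
    fix x
    show "adj G A f x = cnj (c (pstart G x)) * f x"
    proof (cases "x \<in> FP G")
      case False
      then show ?thesis using f(1) by (simp add: adj_def l2_out)
    next
      case True
      show ?thesis
      proof (cases "pstart G x \<in> S")
        case False
        then show ?thesis using True f(1) Axi by (simp add: adj_def linner_xi_c)
      next
        case inS: True
        have "inM G S (A (xi x))" by (rule Ai[OF xi_inM[OF True inS]])
        then have "linner f (A (xi x)) = 0"
          using f(2) unfolding inM_def by (intro linner_zero) (metis mult_zero_left mult_zero_right complex_cnj_zero)
        then show ?thesis using True f inS by (simp add: adj_def)
      qed
    qed
  qed
  show ?case unfolding InvS_def
    apply (intro conjI allI impI i)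
     apply assumption
    apply (rule exI[of _ "\<lambda>w. cnj (c w)"], rule exI[of _ K])
    using ii A(1) by auto
qed



lemma gen_op: "a \<in> gen_DG G X \<Longrightarrow> is_op G a"
  unfolding gen_DG_def wot_closure_def by blast

lemma cent: assumes "condE G a = zero_op" "w \<in> verts G" shows "a (xi (Vtx w)) (Vtx w) = 0"
proof -
  have "condE G a (xi (Vtx w)) (Vtx w) = 0" using assms(1) by (simp add: zero_op_def)
  then show ?thesis using xi_l2[OF Vtx_FP[OF assms(2)]] Vtx_FP[OF assms(2)]
    by (simp add: condE_def linner_xi) (simp add: xi_def)
qed

lemma wot1:
  assumes "a \<in> wot_closure G S0" "f1 \<in> l2 G" "y1 \<in> FP G" "e > 0"
  shows "\<exists>A\<in>S0. cmod (a f1 y1 - A f1 y1) < e"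
proof -
  have "finite {(f1, xi y1)}" "{(f1, xi y1)} \<subseteq> l2 G \<times> l2 G" using assms xi_l2 by auto
  then obtain A where "A \<in> S0" "\<forall>(f,g)\<in>{(f1, xi y1)}. cmod (linner (a f) g - linner (A f) g) < e"
    using assms(1,4) unfolding wot_closure_def by blast
  then show ?thesis by (auto simp: linner_xi)
qed

lemma wot2:
  assumes "a \<in> wot_closure G S0" "f1 \<in> l2 G" "y1 \<in> FP G" "f2 \<in> l2 G" "y2 \<in> FP G" "e > 0"
  shows "\<exists>A\<in>S0. cmod (a f1 y1 - A f1 y1) < e \<and> cmod (a f2 y2 - A f2 y2) < e"
proof -
  have "finite {(f1, xi y1), (f2, xi y2)}" "{(f1, xi y1), (f2, xi y2)} \<subseteq> l2 G \<times> l2 G" using assms xi_l2 by auto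
  then obtain A where "A \<in> S0" "\<forall>(f,g)\<in>{(f1, xi y1), (f2, xi y2)}. cmod (linner (a f) g - linner (A f) g) < e"
    using assms(1,6) unfolding wot_closure_def by blast
  then show ?thesis by (auto simp: linner_xi)
qed

lemma small_zero:
  fixes z :: complex
  assumes "M > 0" "\<And>e. e > 0 \<Longrightarrow> cmod z < e * M" shows "z = 0"
proof (rule ccontr)
  assume "z \<noteq> 0"
  then have "cmod z / M > 0" using assms(1) by simp
  from assms(2)[OF this] show False using assms(1) by simp
qed

lemma claim1:
  assumes wf: "wf_digraph G" and S: "v1 \<in> S" "v2 \<in> S"
    and a: "a \<in> gen_DG G (corner G v1 v2)" "condE G a = zero_op" and u: "u \<in> verts G"
  shows "inM G S (a (xi (Vtx u)))"
  unfolding inM_def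
proof (intro allI impI)
  fix x assume x: "x \<notin> FP G \<or> pstart G x \<notin> S"
  have op: "is_op G a" by (rule gen_op[OF a(1)])
  have uF: "Vtx u \<in> FP G" by (rule Vtx_FP[OF u])
  have xil: "xi (Vtx u) \<in> l2 G" by (rule xi_l2[OF uF])
  show "a (xi (Vtx u)) x = 0"
  proof (cases "x \<in> FP G")
    case False then show ?thesis using op_out[OF op] by blast
  next
    case xF: True
    with x have xS: "pstart G x \<notin> S" by blast
    show ?thesis
    proof (cases "x = Vtx u")
      case True then show ?thesis using cent[OF a(2) u] by simp
    next
      case xne: False
      have "cmod (a (xi (Vtx u)) x) < e * 1" if e: "e > 0" for e
      proof -
        obtain A where A: "A \<in> star_alg G (vertex_ops G \<union> corner G v1 v2)"
          "cmod (a (xi (Vtx u)) x - A (xi (Vtx u)) x) < e"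
          using wot1[OF a(1)[unfolded gen_DG_def] xil xF e] by blast
        have inv: "InvS G S A" by (rule inv_star[OF S A(1)])
        have "A (xi (Vtx u)) x = 0"
        proof (cases "u \<in> S")
          case True
          have "inM G S (xi (Vtx u))" by (rule xi_inM[OF uF]) (simp add: True)
          then have "inM G S (A (xi (Vtx u)))" using inv unfolding InvS_def by blast
          then show ?thesis using xS unfolding inM_def by blast
        next
          case False
          obtain c K where "\<forall>f\<in>l2 G. (\<forall>x. pstart G x \<in> S \<longrightarrow> f x = 0) \<longrightarrow> A f = (\<lambda>x. c (pstart G x) * f x)"
            using inv unfolding InvS_def by blast
          moreover have "\<forall>y. pstart G y \<in> S \<longrightarrow> xi (Vtx u) y = 0" using False by (auto simp: xi_def)
          ultimately have "A (xi (Vtx u)) = (\<lambda>y. c (pstart G y) * xi (Vtx u) y)" using xil by blast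
          then show ?thesis using xne by (simp add: xi_def)
        qed
        then show ?thesis using A(2) by simp
      qed
      then show ?thesis by (intro small_zero[of 1]) auto
    qed
  qed
qed

lemma claim2:
  assumes wf: "wf_digraph G" and T: "v3 \<in> T" "v4 \<in> T"
    and b: "b \<in> gen_DG G (corner G v3 v4)" "condE G b = zero_op"
    and g: "g \<in> l2 G" "\<forall>x. pstart G x \<in> T \<longrightarrow> g x = 0"
  shows "b g = (\<lambda>x. 0)"
proof (rule ext)
  fix x
  have op: "is_op G b" by (rule gen_op[OF b(1)])
  show "b g x = 0"
  proof (cases "x \<in> FP G")
    case False then show ?thesis using op_out[OF op] by blast
  next
    case xF: True
    define w where "w = pstart G x"
    have w: "w \<in> verts G" unfolding w_def by (rule pstart_verts[OF wf xF])
    have wF: "Vtx w \<in> FP G" by (rule Vtx_FP[OF w])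
    have xil: "xi (Vtx w) \<in> l2 G" by (rule xi_l2[OF wF])
    have "cmod (b g x) < e * (1 + cmod (g x))" if e: "e > 0" for e
    proof -
      obtain B where B: "B \<in> star_alg G (vertex_ops G \<union> corner G v3 v4)"
        "cmod (b g x - B g x) < e" "cmod (b (xi (Vtx w)) (Vtx w) - B (xi (Vtx w)) (Vtx w)) < e"
        using wot2[OF b(1)[unfolded gen_DG_def] g(1) xF xil wF e] by blast
      have inv: "InvS G T B" by (rule inv_star[OF T B(1)])
      obtain c K where cB: "\<forall>f\<in>l2 G. (\<forall>x. pstart G x \<in> T \<longrightarrow> f x = 0) \<longrightarrow> B f = (\<lambda>x. c (pstart G x) * f x)"
        using inv unfolding InvS_def by blast
      have Bg: "B g x = c w * g x" using cB g unfolding w_def by auto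
      have le: "cmod (B g x) \<le> e * cmod (g x)"
      proof (cases "w \<in> T")
        case True
        then have "g x = 0" using g(2) unfolding w_def by blast
        then show ?thesis using Bg by simp
      next
        case False
        have "\<forall>y. pstart G y \<in> T \<longrightarrow> xi (Vtx w) y = 0" using False by (auto simp: xi_def)
        then have "B (xi (Vtx w)) = (\<lambda>y. c (pstart G y) * xi (Vtx w) y)" using cB xil by blast
        then have "B (xi (Vtx w)) (Vtx w) = c w" by (simp add: xi_def)
        moreover have "b (xi (Vtx w)) (Vtx w) = 0" by (rule cent[OF b(2) w])
        ultimately have "cmod (c w) < e" using B(3) by simp
        then show ?thesis using Bg by (simp add: norm_mult mult_right_mono)
      qed
      have "cmod (b g x) \<le> cmod (b g x - B g x) + cmod (B g x)"
        by (metis add.commute diff_add_cancel norm_triangle_ineq)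
      also have "\<dots> < e + e * cmod (g x)" using B(2) le by simp
      finally show ?thesis by (simp add: algebra_simps)
    qed
    then show ?thesis by (intro small_zero[of "1 + cmod (g x)"]) (auto simp: add_pos_nonneg)
  qed
qed



lemma foldr_comp: "foldr (\<circ>) fs g = foldr (\<circ>) fs id \<circ> g"
  by (induction fs) auto

lemma foldr_zero: "(\<forall>h\<in>set fs. is_op G h) \<Longrightarrow> foldr (\<circ>) fs id (\<lambda>x. 0) = (\<lambda>x. 0)"
  by (induction fs) (auto simp: op_zero)

lemma key:
  assumes wf: "wf_digraph G" and d: "distinct [v1, v2, v3, v4]"
    and p: "ap \<in> gen_DG G (if bp then corner G v1 v2 else corner G v3 v4)" "condE G ap = zero_op"
    and q: "aq \<in> gen_DG G (if bq then corner G v1 v2 else corner G v3 v4)" "condE G aq = zero_op"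
    and ne: "bp \<noteq> bq" and u: "u \<in> verts G"
  shows "ap (aq (xi (Vtx u))) = (\<lambda>x. 0)"
proof (cases bq)
  case True
  then have bp: "\<not> bp" using ne by simp
  have i: "inM G {v1, v2} (aq (xi (Vtx u)))"
    using claim1[OF wf _ _ q(1)[unfolded if_P[OF True]] q(2) u] by simp
  have l: "aq (xi (Vtx u)) \<in> l2 G"
    using gen_op[OF q(1)] xi_l2[OF Vtx_FP[OF u]] unfolding is_op_def by blast
  have h: "\<forall>x. pstart G x \<in> {v3, v4} \<longrightarrow> aq (xi (Vtx u)) x = 0" using i d unfolding inM_def by auto
  show ?thesis by (rule claim2[OF wf _ _ p(1)[unfolded if_not_P[OF bp]] p(2) l h]) auto
next
  case False
  then have bp: "bp" using ne by simp
  have i: "inM G {v3, v4} (aq (xi (Vtx u)))"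
    using claim1[OF wf _ _ q(1)[unfolded if_not_P[OF False]] q(2) u] by simp
  have l: "aq (xi (Vtx u)) \<in> l2 G"
    using gen_op[OF q(1)] xi_l2[OF Vtx_FP[OF u]] unfolding is_op_def by blast
  have h: "\<forall>x. pstart G x \<in> {v1, v2} \<longrightarrow> aq (xi (Vtx u)) x = 0" using i d unfolding inM_def by auto
  show ?thesis by (rule claim2[OF wf _ _ p(1)[unfolded if_P[OF bp]] p(2) l h]) auto
qed

theorem mainTheorem5:
  fixes G :: "('v,'e) pre_digraph" and v1 v2 v3 v4 :: 'v
  assumes "wf_digraph G"
    and "countable (verts G)" and "countable (arcs G)"
    and "v1 \<in> verts G" and "v2 \<in> verts G" and "v3 \<in> verts G" and "v4 \<in> verts G"
    and "distinct [v1, v2, v3, v4]"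
  shows "free_over_DG G (corner G v1 v2) (corner G v3 v4)"
  unfolding free_over_DG_def
proof (intro allI impI)
  fix xs :: "(bool \<times> ('v,'e) op) list"
  assume ne: "xs \<noteq> []"
    and alt: "\<forall>i. Suc i < length xs \<longrightarrow> fst (xs ! i) \<noteq> fst (xs ! Suc i)"
    and mem: "\<forall>(b, a)\<in>set xs. a \<in> gen_DG G (if b then corner G v1 v2 else corner G v3 v4) \<and> condE G a = zero_op"
  let ?P = "foldr (\<circ>) (map snd xs) id"
  have vt: "?P (xi (Vtx u)) (Vtx u) = 0" if u: "u \<in> verts G" for u
  proof -
    obtain ys q where xs: "xs = ys @ [q]" using ne by (metis rev_exhaust)
    show ?thesis
    proof (cases "ys = []")
      case True
      then have "?P = snd q" using xs by simp
      moreover have "condE G (snd q) = zero_op" using mem xs by (cases q) auto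
      ultimately show ?thesis using cent u by simp
    next
      case False
      then obtain zs p where ys: "ys = zs @ [p]" by (metis rev_exhaust)
      have xs2: "xs = zs @ [p, q]" using xs ys by simp
      have "fst (xs ! length zs) \<noteq> fst (xs ! Suc (length zs))"
        using alt[rule_format, of "length zs"] xs2 by simp
      moreover have "xs ! length zs = p" "xs ! Suc (length zs) = q" using xs2 by (simp_all add: nth_append)
      ultimately have ne2: "fst p \<noteq> fst q" by simp
      have mp: "snd p \<in> gen_DG G (if fst p then corner G v1 v2 else corner G v3 v4)" "condE G (snd p) = zero_op"
        using mem xs2 by (cases p; auto)+
      have mq: "snd q \<in> gen_DG G (if fst q then corner G v1 v2 else corner G v3 v4)" "condE G (snd q) = zero_op"
        using mem xs2 by (cases q; auto)+
      have z: "snd p (snd q (xi (Vtx u))) = (\<lambda>x. 0)"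
        by (rule key[OF assms(1) assms(8) mp mq ne2 u])
      have ops: "\<forall>h\<in>set (map snd zs). is_op G h"
        using mem xs2 gen_op by fastforce
      have "?P = foldr (\<circ>) (map snd zs) id \<circ> (snd p \<circ> snd q)"
        using xs2 by (simp add: foldr_comp[of _ "snd p \<circ> snd q"])
      then have "?P (xi (Vtx u)) = (\<lambda>x. 0)" using z foldr_zero[OF ops] by simp
      then show ?thesis by simp
    qed
  qed
  show "condE G ?P = zero_op"
    unfolding zero_op_def
  proof (intro ext)
    fix f x
    show "condE G ?P f x = 0"
    proof (cases "f \<in> l2 G \<and> x \<in> FP G")
      case True
      then have "pstart G x \<in> verts G" using pstart_verts[OF assms(1)] by blast
      then show ?thesis using True vt by (simp add: condE_def linner_xi)
    qed (auto simp: condE_def)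
  qed
qed

end
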